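(* Let $L\ge 2$ and let $M_1,\dots,M_L$ be pairwise distinct positive integers. Let $N$ be an integer with $0\le N<\operatorname{lcm}(M_1,\dots,M_L)$, and for $1\le i\le L$ let $r_i\in\{0,\dots,M_i-1\}$ be the remainder of $N$ modulo $M_i$ and $n_i=(N-r_i)/M_i$ the corresponding folding number. Let $\tilde r_1,\dots,\tilde r_L$ be integers with $0\le\tilde r_i\le M_i-1$ (erroneous remainders) and put $\Delta r_i=\tilde r_i-r_i$. Run the single-stage algorithm (described in the context) on the moduli $M_1,\dots,M_L$ with reference index $k=1$ and inputs $\tilde r_1,\dots,\tilde r_L$, producing $\hat n_1,\dots,\hat n_L$. Then $\hat n_i=n_i$ for all $1\le i\le L$ if and only if $$-\frac{\gcd(M_1,M_i)}{2}\le \Delta r_i-\Delta r_1<\frac{\gcd(M_1,M_i)}{2}\quad\text{for all }2\le i\le L.$$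
   Context: For $x\in\mathbb R$, $[x]$ denotes the unique integer with $-1/2\le x-[x]<1/2$. Single-stage algorithm: let $P_1,\dots,P_m$ ($m\ge2$) be pairwise distinct positive integers, $k\in\{1,\dots,m\}$ a reference index, and $x_1,\dots,x_m$ integers. For each $i\ne k$ put $m_{ki}=\gcd(P_k,P_i)$, $\Gamma_{ki}=P_k/m_{ki}$, $\Gamma_{ik}=P_i/m_{ki}$, $\hat q_{ik}=[(x_i-x_k)/m_{ki}]$; let $\bar\Gamma_{ki}$ be a multiplicative inverse of $\Gamma_{ki}$ modulo $\Gamma_{ik}$, and let $\hat\xi_{ik}\in\{0,\dots,\Gamma_{ik}-1\}$ with $\hat\xi_{ik}\equiv\hat q_{ik}\bar\Gamma_{ki}\pmod{\Gamma_{ik}}$. Let $\hat n_k$ be the least nonnegative integer $y$ with $y\equiv\hat\xi_{ik}\pmod{\Gamma_{ik}}$ for all $i\ne k$ (if no such $y$ exists the algorithm fails and its outputs are regarded as not equal to any target values). For $i\ne k$ set $\hat n_i=(\hat n_k\Gamma_{ki}-\hat q_{ik})/\Gamma_{ik}$. Outputs: $\hat n_1,\dots,\hat n_m$ and the estimate $[\frac1m\sum_{i=1}^m(\hat n_iP_i+x_i)]$. *)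

theory Defs
  imports "HOL-Number_Theory.Number_Theory"
begin

definition rnd :: "real \<Rightarrow> int" where
  "rnd x = (THE z. - (1/2) \<le> x - of_int z \<and> x - of_int z < 1/2)"

text \<open>Returns None if the algorithm fails (no solution of the congruence system),
  otherwise Some of the folding-number estimates (meaningful on {1..m}).\<close>
definition ss_nhat :: "nat \<Rightarrow> (nat \<Rightarrow> int) \<Rightarrow> nat \<Rightarrow> (nat \<Rightarrow> int) \<Rightarrow> (nat \<Rightarrow> int) option" where
  "ss_nhat m P k x =
    (let mk = (\<lambda>i. gcd (P k) (P i));
         Gki = (\<lambda>i. P k div mk i);
         Gik = (\<lambda>i. P i div mk i);
         q = (\<lambda>i. rnd (of_int (x i - x k) / of_int (mk i)));
         binv = (\<lambda>i. SOME b. [Gki i * b = 1] (mod Gik i));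
         xi = (\<lambda>i. (q i * binv i) mod Gik i);
         sol = (\<lambda>y::nat. \<forall>i\<in>{1..m} - {k}. [int y = xi i] (mod Gik i))
     in if \<exists>y. sol y then
          (let nk = int (LEAST y. sol y)
           in Some (\<lambda>i. if i = k then nk else (nk * Gki i - q i) div Gik i))
        else None)"

end

theory Submission
  imports Defs
begin

lemma rnd_floor: "rnd x = \<lfloor>x + 1/2\<rfloor>"
  unfolding rnd_def
proof (rule the_equality)
  show "- (1/2) \<le> x - of_int \<lfloor>x + 1/2\<rfloor> \<and> x - of_int \<lfloor>x + 1/2\<rfloor> < 1/2"
    by linarith
next
  fix z assume "- (1/2) \<le> x - of_int z \<and> x - of_int z < 1/2"
  then show "z = \<lfloor>x + 1/2\<rfloor>" by (simp add: floor_eq_iff) linarith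
qed

lemma rnd_shift: "rnd (of_int a + x) = a + rnd x"
proof -
  have "of_int a + x + 1/2 = (x + 1/2) + of_int a" by simp
  then have "\<lfloor>of_int a + x + 1/2\<rfloor> = \<lfloor>(x + 1/2) + of_int a\<rfloor>" by (rule arg_cong)
  also have "\<dots> = \<lfloor>x + 1/2\<rfloor> + a" by (rule floor_add_int[symmetric])
  finally show ?thesis unfolding rnd_floor by simp
qed

lemma rnd_zero: "rnd x = 0 \<longleftrightarrow> - (1/2) \<le> x \<and> x < 1/2"
  unfolding rnd_floor by (simp add: floor_eq_iff) linarith

theorem theorem1:
  fixes L :: nat and M :: "nat \<Rightarrow> int" and N :: int and rt :: "nat \<Rightarrow> int"
  assumes "L \<ge> 2"
    and "\<forall>i\<in>{1..L}. M i > 0"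
    and "inj_on M {1..L}"
    and "0 \<le> N" and "N < Lcm (M ` {1..L})"
    and "\<forall>i\<in>{1..L}. 0 \<le> rt i \<and> rt i \<le> M i - 1"
  shows "(\<exists>f. ss_nhat L M 1 rt = Some f \<and>
            (\<forall>i\<in>{1..L}. f i = (N - N mod M i) div M i))
         \<longleftrightarrow>
         (\<forall>i\<in>{2..L}.
            - (real_of_int (gcd (M 1) (M i)) / 2)
              \<le> real_of_int ((rt i - N mod M i) - (rt 1 - N mod M 1))
            \<and> real_of_int ((rt i - N mod M i) - (rt 1 - N mod M 1))
              < real_of_int (gcd (M 1) (M i)) / 2)"
proof -
  define g where "g = (\<lambda>i. gcd (M 1) (M i))"
  define A where "A = (\<lambda>i. M 1 div g i)"
  define B where "B = (\<lambda>i. M i div g i)"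
  define q where "q = (\<lambda>i. rnd (of_int (rt i - rt 1) / of_int (g i)))"
  define bi where "bi = (\<lambda>i. SOME b. [A i * b = 1] (mod B i))"
  define xi where "xi = (\<lambda>i. (q i * bi i) mod B i)"
  define sol where "sol = (\<lambda>y::nat. \<forall>i\<in>{1..L} - {1}. [int y = xi i] (mod B i))"
  define n where "n = (\<lambda>i. (N - N mod M i) div M i)"
  define r where "r = (\<lambda>i. N mod M i)"
  define D where "D = (\<lambda>i. (rt i - r i) - (rt 1 - r 1))"
  have ss: "ss_nhat L M 1 rt = (if \<exists>y. sol y then Some (\<lambda>i. if i = 1 then int (LEAST y. sol y)
      else (int (LEAST y. sol y) * A i - q i) div B i) else None)"
    unfolding ss_nhat_def Let_def sol_def xi_def bi_def q_def A_def B_def g_def by simp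
  have M1: "M 1 > 0" using assms(1,2) by auto
  have gpos: "g i > 0" if "i \<in> {1..L}" for i
  proof -
    have "M i > 0" using that assms(2) by auto
    then show ?thesis by (simp add: g_def)
  qed
  have Ag: "A i * g i = M 1" for i by (simp add: A_def g_def)
  have Bg: "B i * g i = M i" for i by (simp add: B_def g_def)
  have Bpos: "B i > 0" if "i \<in> {1..L}" for i
  proof -
    have "M i > 0" using that assms(2) by blast
    then have "0 < B i * g i" using Bg[of i] by simp
    then show ?thesis using gpos[OF that] by (simp add: zero_less_mult_iff)
  qed
  have cop: "coprime (A i) (B i)" if "i \<in> {1..L}" for i
    using gpos[OF that] by (simp add: A_def B_def g_def div_gcd_coprime)
  have binv: "[A i * bi i = 1] (mod B i)" if "i \<in> {1..L}" for i
    unfolding bi_def using cong_solve_coprime_int[OF cop[OF that]] by (rule someI_ex)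
  have NM: "N = n i * M i + r i" if "i \<in> {1..L}" for i
    by (simp add: n_def r_def minus_mod_eq_mult_div [symmetric])
  define q0 where "q0 = (\<lambda>i. n 1 * A i - n i * B i)"
  have q0g: "q0 i * g i = r i - r 1" if "i \<in> {1..L}" for i
  proof -
    have "q0 i * g i = n 1 * (A i * g i) - n i * (B i * g i)"
      unfolding q0_def by (simp add: algebra_simps)
    also have "\<dots> = n 1 * M 1 - n i * M i" using Ag[of i] Bg[of i] by simp
    also have "\<dots> = r i - r 1" using NM[OF that] NM[of 1] assms(1) by auto
    finally show ?thesis .
  qed
  have qsplit: "q i = q0 i + rnd (of_int (D i) / of_int (g i))" if "i \<in> {1..L}" for i
  proof -
    have "rt i - rt 1 = q0 i * g i + D i" using q0g[OF that] by (simp add: D_def)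
    then have "of_int (rt i - rt 1) / of_int (g i) = of_int (q0 i) + (of_int (D i) / of_int (g i) :: real)"
      using gpos[OF that] by (simp add: field_simps)
    then show ?thesis unfolding q_def by (simp add: rnd_shift)
  qed
  have cond_iff: "(q i = q0 i) \<longleftrightarrow> (- (real_of_int (g i) / 2) \<le> real_of_int (D i) \<and> real_of_int (D i) < real_of_int (g i) / 2)"
    if "i \<in> {1..L}" for i
  proof -
    have gp: "real_of_int (g i) > 0" using gpos[OF that] by simp
    have "q i = q0 i \<longleftrightarrow> rnd (of_int (D i) / of_int (g i)) = 0" using qsplit[OF that] by simp
    also have "\<dots> \<longleftrightarrow> - (1/2) \<le> real_of_int (D i) / real_of_int (g i) \<and> real_of_int (D i) / real_of_int (g i) < 1/2"
      by (rule rnd_zero)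
    also have "\<dots> \<longleftrightarrow> (- (real_of_int (g i) / 2) \<le> real_of_int (D i) \<and> real_of_int (D i) < real_of_int (g i) / 2)"
      using gp by (simp add: field_simps)
    finally show ?thesis .
  qed
  have sol_iff: "sol y \<longleftrightarrow> (\<forall>i\<in>{2..L}. [int y * A i = q i] (mod B i))" for y
  proof -
    have "[int y = xi i] (mod B i) \<longleftrightarrow> [int y * A i = q i] (mod B i)" if "i \<in> {1..L}" for i
    proof
      assume "[int y = xi i] (mod B i)"
      then have "[int y = q i * bi i] (mod B i)" by (simp add: xi_def cong_def)
      then have "[int y * A i = q i * (A i * bi i)] (mod B i)"
        using cong_scalar_right[of "int y" "q i * bi i" "B i" "A i"] by (simp add: mult_ac)
      moreover have "[q i * (A i * bi i) = q i * 1] (mod B i)" using binv[OF that] by (rule cong_scalar_left)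
      ultimately have "[int y * A i = q i * 1] (mod B i)" by (rule cong_trans)
      then show "[int y * A i = q i] (mod B i)" by simp
    next
      assume "[int y * A i = q i] (mod B i)"
      then have "[int y * (A i * bi i) = q i * bi i] (mod B i)"
        using cong_scalar_right[of "int y * A i" "q i" "B i" "bi i"] by (simp add: mult_ac)
      moreover have "[int y * (A i * bi i) = int y * 1] (mod B i)" using binv[OF that] by (rule cong_scalar_left)
      ultimately have "[int y * 1 = q i * bi i] (mod B i)" by (metis cong_sym cong_trans)
      then have "[int y = q i * bi i] (mod B i)" by simp
      then show "[int y = xi i] (mod B i)" by (simp add: xi_def cong_def)
    qed
    moreover have "{1..L} - {1} = {2..L}" by auto
    ultimately show ?thesis unfolding sol_def by auto
  qed
  have Dre: "D i = (rt i - N mod M i) - (rt 1 - N mod M 1)" for i by (simp add: D_def r_def)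
  have ndiv: "n i = N div M i" if "i \<in> {1..L}" for i
  proof -
    have "M i > 0" using that assms(2) by blast
    then show ?thesis by (simp add: n_def minus_mod_eq_mult_div)
  qed
  have one: "1 \<in> {1..L}" using assms(1) by simp
  have i2: "i \<in> {1..L}" "i \<noteq> 1" if "i \<in> {2..L}" for i using that by auto
  show ?thesis
  proof
    assume "\<exists>f. ss_nhat L M 1 rt = Some f \<and> (\<forall>i\<in>{1..L}. f i = (N - N mod M i) div M i)"
    then obtain f where f1: "ss_nhat L M 1 rt = Some f"
      and f2': "\<forall>i\<in>{1..L}. f i = (N - N mod M i) div M i" by (elim exE conjE)
    have f2: "\<forall>i\<in>{1..L}. f i = n i" using f2' unfolding n_def by simp
    have ex: "\<exists>y. sol y"
    proof (rule ccontr)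
      assume "\<not> (\<exists>y. sol y)"
      then have "ss_nhat L M 1 rt = None" using ss by simp
      then show False using f1 by simp
    qed
    define y0 where "y0 = Least sol"
    have sy0: "sol y0" using LeastI_ex[OF ex] y0_def by simp
    have fe: "f = (\<lambda>i. if i = 1 then int y0 else (int y0 * A i - q i) div B i)"
      unfolding y0_def using f1 ss ex by simp
    have "f 1 = n 1" using f2 one by blast
    then have y0n: "int y0 = n 1" using fe by simp
    show "\<forall>i\<in>{2..L}.
            - (real_of_int (gcd (M 1) (M i)) / 2)
              \<le> real_of_int ((rt i - N mod M i) - (rt 1 - N mod M 1))
            \<and> real_of_int ((rt i - N mod M i) - (rt 1 - N mod M 1))
              < real_of_int (gcd (M 1) (M i)) / 2"
    proof
      fix i assume i: "i \<in> {2..L}"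
      have c: "[n 1 * A i = q i] (mod B i)" using sy0 i y0n sol_iff by auto
      have dv: "B i dvd (n 1 * A i - q i)" using c by (simp add: cong_iff_dvd_diff)
      have "f i = n i" using f2 i2(1)[OF i] by blast
      then have "(n 1 * A i - q i) div B i = n i" using fe i2(2)[OF i] y0n by simp
      moreover have "(n 1 * A i - q i) div B i * B i = n 1 * A i - q i" using dv by simp
      ultimately have "n 1 * A i - q i = n i * B i" by simp
      then have "q i = q0 i" by (simp add: q0_def)
      then show "- (real_of_int (gcd (M 1) (M i)) / 2)
              \<le> real_of_int ((rt i - N mod M i) - (rt 1 - N mod M 1))
            \<and> real_of_int ((rt i - N mod M i) - (rt 1 - N mod M 1))
              < real_of_int (gcd (M 1) (M i)) / 2"
        using cond_iff[OF i2(1)[OF i]] Dre g_def by simp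
    qed
  next
    assume rhs: "\<forall>i\<in>{2..L}.
            - (real_of_int (gcd (M 1) (M i)) / 2)
              \<le> real_of_int ((rt i - N mod M i) - (rt 1 - N mod M 1))
            \<and> real_of_int ((rt i - N mod M i) - (rt 1 - N mod M 1))
              < real_of_int (gcd (M 1) (M i)) / 2"
    have qq: "q i = q0 i" if i: "i \<in> {2..L}" for i
      using cond_iff[OF i2(1)[OF i]] rhs i Dre g_def by simp
    have n1nn: "n 1 \<ge> 0" using ndiv[OF one] assms(4) M1 by (simp add: pos_imp_zdiv_nonneg_iff)
    have sn: "sol (nat (n 1))" unfolding sol_iff
    proof
      fix i assume i: "i \<in> {2..L}"
      have "n 1 * A i = q i + n i * B i" using qq[OF i] by (simp add: q0_def)
      then show "[int (nat (n 1)) * A i = q i] (mod B i)" using n1nn by (simp add: cong_iff_dvd_diff)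
    qed
    then have ex: "\<exists>y. sol y" by blast
    define y0 where "y0 = Least sol"
    have sy0: "sol y0" using LeastI_ex[OF ex] y0_def by simp
    have yle: "y0 \<le> nat (n 1)" using Least_le[of sol, OF sn] y0_def by simp
    have dvdall: "m dvd (n 1 - int y0) * M 1" if "m \<in> M ` {1..L}" for m
    proof -
      obtain i where i: "i \<in> {1..L}" and mi: "m = M i" using \<open>m \<in> M ` {1..L}\<close> by blast
      show ?thesis
      proof (cases "i = 1")
        case True then show ?thesis using mi by simp
      next
        case False
        then have i': "i \<in> {2..L}" using i by auto
        have c1: "[int y0 * A i = q i] (mod B i)" using sy0 sol_iff i' by auto
        have c2: "[int (nat (n 1)) * A i = q i] (mod B i)" using sn sol_iff i' by auto
        have c2': "[n 1 * A i = q i] (mod B i)" using c2 n1nn by simp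
        have "[n 1 * A i = int y0 * A i] (mod B i)" using cong_trans[OF c2' cong_sym[OF c1]] .
        then have "B i dvd (n 1 - int y0) * A i" by (simp add: cong_iff_dvd_diff algebra_simps)
        then have "B i * g i dvd (n 1 - int y0) * A i * g i" by (simp add: mult_dvd_mono)
        then show ?thesis using mi Bg[of i] Ag[of i] by (simp add: mult.assoc)
      qed
    qed
    have Ld: "Lcm (M ` {1..L}) dvd (n 1 - int y0) * M 1" using dvdall by (rule Lcm_least)
    have b0: "0 \<le> (n 1 - int y0) * M 1" using yle n1nn M1 by simp
    have r1: "0 \<le> r 1" using M1 by (simp add: r_def)
    have b1: "(n 1 - int y0) * M 1 \<le> n 1 * M 1" using M1 by (simp add: mult_right_mono)
    have b2: "n 1 * M 1 \<le> N" using NM[OF one] r1 by linarith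
    have "(n 1 - int y0) * M 1 = 0"
    proof (rule ccontr)
      assume "(n 1 - int y0) * M 1 \<noteq> 0"
      then have "(n 1 - int y0) * M 1 > 0" using b0 by linarith
      then have "Lcm (M ` {1..L}) \<le> (n 1 - int y0) * M 1" using Ld by (simp add: zdvd_imp_le)
      then show False using b1 b2 assms(5) by linarith
    qed
    then have y0n: "int y0 = n 1" using M1 by simp
    define F where "F = (\<lambda>i. if i = 1 then int y0 else (int y0 * A i - q i) div B i)"
    have sF: "ss_nhat L M 1 rt = Some F"
      unfolding F_def y0_def using ss ex by simp
    have vF: "F i = (N - N mod M i) div M i" if i: "i \<in> {1..L}" for i
    proof (cases "i = 1")
      case True then show ?thesis using y0n unfolding F_def n_def by simp
    next
      case False
      then have i': "i \<in> {2..L}" using i by auto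
      have "int y0 * A i - q i = n i * B i" using y0n qq[OF i'] by (simp add: q0_def)
      then have "F i = n i" unfolding F_def using False Bpos[OF i] by simp
      then show ?thesis unfolding n_def .
    qed
    show "\<exists>f. ss_nhat L M 1 rt = Some f \<and> (\<forall>i\<in>{1..L}. f i = (N - N mod M i) div M i)"
      by (intro exI[of _ F] conjI sF ballI vF)
  qed
qed

end
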